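(* Let $n\ge 2$ and $\sigma,\tau\in S_n$. Put $i=\sigma^{-1}(n-1)$, $j=\tau^{-1}(n-1)$, $a=\tau(i)$, $b=\sigma(j)$, $c=\sigma(n-1)$, $e=\tau(n-1)$, and $\Delta=\mathrm{hd}(\sigma,\tau)-\mathrm{hd}(\sigma^{\sf CT},\tau^{\sf CT})$. Then: (0) $\Delta=0$ if and only if one of the following holds: (1) $i,j,n-1$ pairwise distinct, $a\neq b$ and $c=e$; (2) $i,j,n-1$ pairwise distinct, $a=b$ and $c=e$; (3) $i=j\neq n-1$, $a=b=n-1$, $c\neq e$; (4) $i=j\neq n-1$, $a=b=n-1$, $c=e$; (5) $i=j=n-1$ and $a=b=c=e=n-1$. (I) $\Delta=1$ if and only if one of the following holds: (6) $i,j,n-1$ pairwise distinct and $a,b,c,e$ pairwise distinct; (7) $i,j,n-1$ pairwise distinct, $a=b$, $c\neq e$; (8) $i=n-1\neq j$, $a=e$, $c=n-1$, and $a,b,n-1$ pairwise distinct; (9) $j=n-1\neq i$, $b=c$, $e=n-1$, and $a,b,n-1$ pairwise distinct. (II) $\Delta=2$ if and only if one of the following holds: (10) $i,j,n-1$ pairwise distinct, $a=c$, $b\neq e$; (11) $i,j,n-1$ pairwise distinct, $a\neq c$, $b=e$; (12) $i=n-1\neq j$ and $a=b=e\neq c=n-1$; (13) $j=n-1\neq i$ and $a=b=c\neq e=n-1$. (III) $\Delta=3$ if and only if (14) $i,j,n-1$ are pairwise distinct, $a=c$ and $b=e$.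
   Context: $S_n$ is the symmetric group on $\{0,1,\ldots,n-1\}$; ${\rm hd}(\sigma,\tau)=|\{x:\sigma(x)\neq\tau(x)\}|$. The contraction of $\sigma\in S_n$ is $\sigma^{\sf CT}\in S_{n-1}$ (on $\{0,\ldots,n-2\}$) defined by $\sigma^{\sf CT}(x)=\sigma(n-1)$ if $x=\sigma^{-1}(n-1)$ and $\sigma^{\sf CT}(x)=\sigma(x)$ otherwise (i.e. delete $n-1$ from the cycle notation of $\sigma$). *)

theory Defs
  imports "HOL-Combinatorics.Permutations"
begin

definition hd :: "nat \<Rightarrow> (nat \<Rightarrow> nat) \<Rightarrow> (nat \<Rightarrow> nat) \<Rightarrow> nat" where
  "hd n \<sigma> \<tau> = card {x \<in> {..<n}. \<sigma> x \<noteq> \<tau> x}"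

definition contraction :: "nat \<Rightarrow> (nat \<Rightarrow> nat) \<Rightarrow> (nat \<Rightarrow> nat)" where
  "contraction n \<sigma> = (\<lambda>x. if x < n - 1 then
       (if x = inv \<sigma> (n - 1) then \<sigma> (n - 1) else \<sigma> x) else x)"

end

theory Submission
  imports Defs
begin

lemma sum_split_K:
  fixes g :: "nat \<Rightarrow> int"
  assumes "finite A" "K \<subseteq> A"
  shows "sum g A = sum g (A - K) + sum g K"
  using assms by (metis add.commute sum.subset_diff)

theorem proposition4p2:
  fixes n :: nat and \<sigma> \<tau> :: "nat \<Rightarrow> nat"
  assumes "n \<ge> 2" and "\<sigma> permutes {..<n}" and "\<tau> permutes {..<n}"
  defines "i \<equiv> inv \<sigma> (n - 1)" and "j \<equiv> inv \<tau> (n - 1)"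
      and "a \<equiv> \<tau> (inv \<sigma> (n - 1))" and "b \<equiv> \<sigma> (inv \<tau> (n - 1))" and "c \<equiv> \<sigma> (n - 1)" and "e \<equiv> \<tau> (n - 1)"
      and "\<Delta> \<equiv> int (hd n \<sigma> \<tau>) - int (hd (n - 1) (contraction n \<sigma>) (contraction n \<tau>))"
  shows "(\<Delta> = 0 \<longleftrightarrow>
            (distinct [i, j, n - 1] \<and> a \<noteq> b \<and> c = e) \<or>
            (distinct [i, j, n - 1] \<and> a = b \<and> c = e) \<or>
            (i = j \<and> j \<noteq> n - 1 \<and> a = n - 1 \<and> b = n - 1 \<and> c \<noteq> e) \<or>
            (i = j \<and> j \<noteq> n - 1 \<and> a = n - 1 \<and> b = n - 1 \<and> c = e) \<or>
            (i = n - 1 \<and> j = n - 1 \<and> a = n - 1 \<and> b = n - 1 \<and> c = n - 1 \<and> e = n - 1))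
       \<and> (\<Delta> = 1 \<longleftrightarrow>
            (distinct [i, j, n - 1] \<and> distinct [a, b, c, e]) \<or>
            (distinct [i, j, n - 1] \<and> a = b \<and> c \<noteq> e) \<or>
            (i = n - 1 \<and> n - 1 \<noteq> j \<and> a = e \<and> c = n - 1 \<and> distinct [a, b, n - 1]) \<or>
            (j = n - 1 \<and> n - 1 \<noteq> i \<and> b = c \<and> e = n - 1 \<and> distinct [a, b, n - 1]))
       \<and> (\<Delta> = 2 \<longleftrightarrow>
            (distinct [i, j, n - 1] \<and> a = c \<and> b \<noteq> e) \<or>
            (distinct [i, j, n - 1] \<and> a \<noteq> c \<and> b = e) \<or>
            (i = n - 1 \<and> n - 1 \<noteq> j \<and> a = b \<and> b = e \<and> e \<noteq> c \<and> c = n - 1) \<or>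
            (j = n - 1 \<and> n - 1 \<noteq> i \<and> a = b \<and> b = c \<and> c \<noteq> e \<and> e = n - 1))
       \<and> (\<Delta> = 3 \<longleftrightarrow> distinct [i, j, n - 1] \<and> a = c \<and> b = e)"
proof -
  define N where "N = n - 1"
  have nN: "n = Suc N" using assms(1) N_def by simp
  have s: "\<sigma> permutes {..<Suc N}" and t: "\<tau> permutes {..<Suc N}" using assms nN by auto
  have iN: "i \<le> N" unfolding i_def N_def using s nN
    by (metis lessThan_iff less_Suc_eq_le permutes_in_image permutes_inv N_def lessI)
  have jN: "j \<le> N" unfolding j_def N_def using t nN
    by (metis lessThan_iff less_Suc_eq_le permutes_in_image permutes_inv N_def lessI)
  have si: "\<sigma> i = N" unfolding i_def N_def using s permutes_inverses(1) by metis
  have tj: "\<tau> j = N" unfolding j_def N_def using t permutes_inverses(1) by metis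
  have sinj: "\<And>x y. \<sigma> x = \<sigma> y \<longleftrightarrow> x = y" using s permutes_inj by (metis injD)
  have tinj: "\<And>x y. \<tau> x = \<tau> y \<longleftrightarrow> x = y" using t permutes_inj by (metis injD)
  have aa: "a = \<tau> i" "b = \<sigma> j" "c = \<sigma> N" "e = \<tau> N"
    using a_def b_def c_def e_def i_def j_def N_def by auto
  define g :: "nat \<Rightarrow> int" where "g x = of_bool (\<sigma> x \<noteq> \<tau> x)" for x
  define h :: "nat \<Rightarrow> int" where "h x = of_bool (contraction n \<sigma> x \<noteq> contraction n \<tau> x)" for x
  have card_sum: "\<And>A P. finite A \<Longrightarrow> int (card {x\<in>A. P x}) = (\<Sum>x\<in>A. of_bool (P x))"
    by (simp add: sum.inter_filter[symmetric] Int_def Collect_conj_eq[symmetric])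
  have h1: "int (hd n \<sigma> \<tau>) = g N + sum g {..<N}"
    unfolding hd_def g_def nN by (subst card_sum) (simp_all add: lessThan_Suc)
  have h2: "int (hd (n - 1) (contraction n \<sigma>) (contraction n \<tau>)) = sum h {..<N}"
    unfolding hd_def h_def N_def[symmetric] by (subst card_sum) simp_all
  define K where "K = {i, j} \<inter> {..<N}"
  have KA: "K \<subseteq> {..<N}" "finite {..<N}" unfolding K_def by auto
  have eqR: "sum g ({..<N} - K) = sum h ({..<N} - K)"
  proof (rule sum.cong)
    fix x assume "x \<in> {..<N} - K"
    then have "x < N" "x \<noteq> i" "x \<noteq> j" unfolding K_def by auto
    then show "g x = h x" unfolding g_def h_def contraction_def
      using i_def j_def N_def by auto
  qed simp
  have D: "\<Delta> = g N + sum g K - sum h K"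
    unfolding \<Delta>_def h1 h2 using sum_split_K[OF KA(2) KA(1), of g] sum_split_K[OF KA(2) KA(1), of h] eqR
    by simp
  have ci: "i < N \<Longrightarrow> contraction n \<sigma> i = c" unfolding contraction_def aa N_def i_def by auto
  have cj: "j < N \<Longrightarrow> contraction n \<tau> j = e" unfolding contraction_def aa N_def j_def by auto
  have ci2: "i < N \<Longrightarrow> i \<noteq> j \<Longrightarrow> contraction n \<tau> i = a" unfolding contraction_def aa N_def j_def i_def by auto
  have cj2: "j < N \<Longrightarrow> i \<noteq> j \<Longrightarrow> contraction n \<sigma> j = b" unfolding contraction_def aa N_def j_def i_def by auto
  have cj3: "j < N \<Longrightarrow> i = N \<Longrightarrow> contraction n \<sigma> j = b" unfolding contraction_def aa N_def j_def i_def by auto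
  have ci3: "i < N \<Longrightarrow> j = N \<Longrightarrow> contraction n \<tau> i = a" unfolding contraction_def aa N_def j_def i_def by auto
  consider "i < N" "j < N" "i \<noteq> j" | "i < N" "i = j" | "i = N" "j = N" | "i = N" "j < N" | "i < N" "j = N"
    using iN jN by linarith
  then show ?thesis
  proof cases
    case 1
    then have K: "K = {i, j}" unfolding K_def by auto
    have "\<Delta> = g N + g i + g j - h i - h j" using D K 1 by simp
    then have "\<Delta> = of_bool (c \<noteq> e) + 2 - of_bool (c \<noteq> a) - of_bool (b \<noteq> e)"
      unfolding g_def h_def using 1 ci cj ci2 cj2 si tj aa sinj tinj by auto
    moreover have "a \<noteq> e" "b \<noteq> c" "a \<noteq> N" "b \<noteq> N" using aa 1 sinj tinj si tj by (metis less_irrefl)+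
    ultimately show ?thesis using 1 unfolding N_def[symmetric] by auto
  next
    case 2
    then have K: "K = {i}" unfolding K_def by auto
    have "\<Delta> = g N + g i - h i" using D K by simp
    then have "\<Delta> = 0"
      unfolding g_def h_def using 2 ci cj si tj aa by auto
    moreover have "a = N" "b = N" using aa 2 si tj by auto
    ultimately show ?thesis using 2 unfolding N_def[symmetric] by auto
  next
    case 3
    then have K: "K = {}" unfolding K_def by auto
    have "\<Delta> = g N" using D K by simp
    then have "\<Delta> = 0" unfolding g_def using 3 si tj by auto
    moreover have "a = N" "b = N" "c = N" "e = N" using aa 3 si tj by auto
    ultimately show ?thesis using 3 unfolding N_def[symmetric] by auto
  next
    case 4
    then have K: "K = {j}" unfolding K_def by auto
    have "\<Delta> = g N + g j - h j" using D K by simp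
    moreover have "a = e" "c = N" "b \<noteq> N" "e \<noteq> N" using aa 4 sinj tinj si tj by (metis less_irrefl)+
    moreover have "g N = 1" unfolding g_def using aa 4 \<open>c = N\<close> \<open>e \<noteq> N\<close> by simp
    moreover have "g j = 1" unfolding g_def using aa tj \<open>b \<noteq> N\<close> by simp
    moreover have "h j = of_bool (b \<noteq> e)" unfolding h_def using cj cj3 4 by simp
    ultimately have "\<Delta> = 2 - of_bool (b \<noteq> e)" "a = e" "c = N" "b \<noteq> N" "e \<noteq> N" by simp_all
    then show ?thesis using 4 unfolding N_def[symmetric] by auto
  next
    case 5
    then have K: "K = {i}" unfolding K_def by auto
    have "\<Delta> = g N + g i - h i" using D K by simp
    moreover have "b = c" "e = N" "a \<noteq> N" "c \<noteq> N" using aa 5 sinj tinj si tj by (metis less_irrefl)+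
    moreover have "g N = 1" unfolding g_def using aa 5 \<open>c \<noteq> N\<close> \<open>e = N\<close> by simp
    moreover have "g i = 1" unfolding g_def using aa si \<open>a \<noteq> N\<close> by simp
    moreover have "h i = of_bool (c \<noteq> a)" unfolding h_def using ci ci3 5 by simp
    ultimately have "\<Delta> = 2 - of_bool (c \<noteq> a)" "b = c" "e = N" "a \<noteq> N" "c \<noteq> N" by simp_all
    then show ?thesis using 5 unfolding N_def[symmetric] by auto
  qed
qed

end
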